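(* Let $a\ge a_0$. If $(DFE_a)$ admits a solution on $\mathbf V$, then $a=c$.
   Context: Setting: network $\Gamma$ with arcs $\mathcal E$ (finite, closed under inversion $\tilde\gamma(s)=\gamma(1-s)$, disjoint interiors except $\gamma,\tilde\gamma$, vertices $\mathbf V$, connected), Hamiltonians $H_\gamma$ continuous, coercive, quasiconvex in $p$ with $\mathrm{Int}\{H_\gamma(s,\cdot)\le b\}=\{H_\gamma(s,\cdot)<b\}$, $H_{\tilde\gamma}(s,p)=H_\gamma(1-s,-p)$. $a_\gamma=\max_s\min_pH_\gamma$, $c_\gamma$ = least $a$ for which $H_\gamma(s,u')=a$ has a periodic ($u(0)=u(1)$) viscosity subsolution in $(0,1)$, $a_0=\max\{\max_{\gamma\text{ not closed}}a_\gamma,\max_{\gamma\text{ closed}}c_\gamma\}$, and $s\mapsto\min_pH_\gamma(s,p)$ is constant whenever $a_\gamma=a_0$. $\sigma^+_{a,\gamma}(s)=\max\{p:H_\gamma(s,p)=a\}$. Abstract graph $\mathbf X=(\mathbf V,\mathbf E)$ with bijection $\Psi:\mathbf E\to\mathcal E$, $\mathrm o(e)=\Psi(e)(0)$, $\mathrm t(e)=\Psi(e)(1)$, $-e=\Psi^{-1}(\widetilde{\Psi(e)})$, $\mathbf E_x=\{e:\mathrm o(e)=x\}$; for $a\ge a_0$, $\sigma_a(e)=\int_0^1\sigma^+_{a,\Psi(e)}$. $(DFE_a)$: $u(x)=\min_{e\in\mathbf E_x}(u(\mathrm t(e))+\sigma_a(-e))$, $x\in\mathbf V$; subsolution: $u(\mathrm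 t(e))-u(\mathrm o(e))\le\sigma_a(e)$ for all $e$. Critical value: $c=\min\{a\ge a_0:(DFE_a)$ admits a subsolution$\}$ (the minimum exists). *)

theory Defs
  imports "HOL-Analysis.Analysis"
begin

text \<open>Arcs are maps real => 'a (only their values on [0,1] matter); the
  network is a finite set of arcs.  The abstract graph X is taken with
  edge set equal to the set of arcs (Psi = identity), origin o(e) = e 0,
  terminal t(e) = e 1, and -e = reversed arc.\<close>

definition rev_arc :: "(real \<Rightarrow> 'a) \<Rightarrow> (real \<Rightarrow> 'a)" where
  "rev_arc \<gamma> = (\<lambda>s. \<gamma> (1 - s))"

definition vertices :: "(real \<Rightarrow> 'a) set \<Rightarrow> 'a set" where
  "vertices \<E> = {\<gamma> 0 | \<gamma>. \<gamma> \<in> \<E>} \<union> {\<gamma> 1 | \<gamma>. \<gamma> \<in> \<E>}"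

definition network :: "(real \<Rightarrow> 'a::euclidean_space) set \<Rightarrow> bool" where
  "network \<E> \<longleftrightarrow>
     finite \<E> \<and> \<E> \<noteq> {} \<and>
     (\<forall>\<gamma>\<in>\<E>. rev_arc \<gamma> \<in> \<E>) \<and>
     (\<forall>\<gamma>\<in>\<E>. continuous_on {0..1} \<gamma> \<and> inj_on \<gamma> {0..<1} \<and> inj_on \<gamma> {0<..1}) \<and>
     (\<forall>\<gamma>\<in>\<E>. \<forall>\<delta>\<in>\<E>. \<delta> \<noteq> \<gamma> \<and> \<delta> \<noteq> rev_arc \<gamma> \<longrightarrow>
         \<gamma> ` {0<..<1} \<inter> \<delta> ` {0<..<1} = {}) \<and>
     connected (\<Union>\<gamma>\<in>\<E>. \<gamma> ` {0..1})"

definition hamiltonians ::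
  "(real \<Rightarrow> 'a) set \<Rightarrow> ((real \<Rightarrow> 'a) \<Rightarrow> real \<Rightarrow> real \<Rightarrow> real) \<Rightarrow> bool" where
  "hamiltonians \<E> H \<longleftrightarrow>
     (\<forall>\<gamma>\<in>\<E>.
        continuous_on ({0..1} \<times> UNIV) (\<lambda>(s,p). H \<gamma> s p) \<and>
        (\<forall>M. \<exists>R. \<forall>s\<in>{0..1}. \<forall>p. \<bar>p\<bar> \<ge> R \<longrightarrow> H \<gamma> s p \<ge> M) \<and>
        (\<forall>s\<in>{0..1}. \<forall>b. convex {p. H \<gamma> s p \<le> b}) \<and>
        (\<forall>s\<in>{0..1}. \<forall>b. interior {p. H \<gamma> s p \<le> b} = {p. H \<gamma> s p < b}) \<and>
        (\<forall>s\<in>{0..1}. \<forall>p. H (rev_arc \<gamma>) s p = H \<gamma> (1 - s) (- p)))"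

definition minH :: "((real \<Rightarrow> 'a) \<Rightarrow> real \<Rightarrow> real \<Rightarrow> real) \<Rightarrow> (real \<Rightarrow> 'a) \<Rightarrow> real \<Rightarrow> real" where
  "minH H \<gamma> s = (INF p. H \<gamma> s p)"

definition a_arc :: "((real \<Rightarrow> 'a) \<Rightarrow> real \<Rightarrow> real \<Rightarrow> real) \<Rightarrow> (real \<Rightarrow> 'a) \<Rightarrow> real" where
  "a_arc H \<gamma> = (SUP s\<in>{0..1}. minH H \<gamma> s)"

definition visc_subsol :: "(real \<Rightarrow> real \<Rightarrow> real) \<Rightarrow> real \<Rightarrow> (real \<Rightarrow> real) \<Rightarrow> bool" where
  "visc_subsol h a u \<longleftrightarrow>
     continuous_on {0..1} u \<and>
     (\<forall>s\<in>{0<..<1}. \<forall>\<phi> \<phi>'.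
        (\<forall>x. (\<phi> has_real_derivative \<phi>' x) (at x)) \<and> continuous_on UNIV \<phi>' \<and>
        (\<exists>\<delta>>0. \<forall>x\<in>{0<..<1}. \<bar>x - s\<bar> < \<delta> \<longrightarrow> u x - \<phi> x \<le> u s - \<phi> s)
        \<longrightarrow> h s (\<phi>' s) \<le> a)"

definition c_arc :: "((real \<Rightarrow> 'a) \<Rightarrow> real \<Rightarrow> real \<Rightarrow> real) \<Rightarrow> (real \<Rightarrow> 'a) \<Rightarrow> real" where
  "c_arc H \<gamma> = Inf {a. \<exists>u. visc_subsol (H \<gamma>) a u \<and> u 0 = u 1}"

definition a_zero :: "(real \<Rightarrow> 'a) set \<Rightarrow> ((real \<Rightarrow> 'a) \<Rightarrow> real \<Rightarrow> real \<Rightarrow> real) \<Rightarrow> real" where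
  "a_zero \<E> H = Max ((a_arc H) ` {\<gamma>\<in>\<E>. \<gamma> 0 \<noteq> \<gamma> 1} \<union> (c_arc H) ` {\<gamma>\<in>\<E>. \<gamma> 0 = \<gamma> 1})"

definition flat_condition :: "(real \<Rightarrow> 'a) set \<Rightarrow> ((real \<Rightarrow> 'a) \<Rightarrow> real \<Rightarrow> real \<Rightarrow> real) \<Rightarrow> bool" where
  "flat_condition \<E> H \<longleftrightarrow>
     (\<forall>\<gamma>\<in>\<E>. a_arc H \<gamma> = a_zero \<E> H \<longrightarrow>
        (\<forall>s\<in>{0..1}. \<forall>s'\<in>{0..1}. minH H \<gamma> s = minH H \<gamma> s'))"

definition sigma_plus :: "((real \<Rightarrow> 'a) \<Rightarrow> real \<Rightarrow> real \<Rightarrow> real) \<Rightarrow> real \<Rightarrow> (real \<Rightarrow> 'a) \<Rightarrow> real \<Rightarrow> real" where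
  "sigma_plus H a \<gamma> s = Sup {p. H \<gamma> s p = a}"

definition sigma :: "((real \<Rightarrow> 'a) \<Rightarrow> real \<Rightarrow> real \<Rightarrow> real) \<Rightarrow> real \<Rightarrow> (real \<Rightarrow> 'a) \<Rightarrow> real" where
  "sigma H a e = integral {0..1} (sigma_plus H a e)"

definition DFE_sol :: "(real \<Rightarrow> 'a) set \<Rightarrow> ((real \<Rightarrow> 'a) \<Rightarrow> real \<Rightarrow> real \<Rightarrow> real) \<Rightarrow> real \<Rightarrow> ('a \<Rightarrow> real) \<Rightarrow> bool" where
  "DFE_sol \<E> H a u \<longleftrightarrow>
     (\<forall>x\<in>vertices \<E>. u x = Min ((\<lambda>e. u (e 1) + sigma H a (rev_arc e)) ` {e\<in>\<E>. e 0 = x}))"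

definition DFE_subsol :: "(real \<Rightarrow> 'a) set \<Rightarrow> ((real \<Rightarrow> 'a) \<Rightarrow> real \<Rightarrow> real \<Rightarrow> real) \<Rightarrow> real \<Rightarrow> ('a \<Rightarrow> real) \<Rightarrow> bool" where
  "DFE_subsol \<E> H a u \<longleftrightarrow> (\<forall>e\<in>\<E>. u (e 1) - u (e 0) \<le> sigma H a e)"

definition critical_value :: "(real \<Rightarrow> 'a) set \<Rightarrow> ((real \<Rightarrow> 'a) \<Rightarrow> real \<Rightarrow> real \<Rightarrow> real) \<Rightarrow> real" where
  "critical_value \<E> H = Inf {a. a \<ge> a_zero \<E> H \<and> (\<exists>u. DFE_subsol \<E> H a u)}"

end

theory Submission
  imports Defs
begin

context
  fixes h :: "real \<Rightarrow> real \<Rightarrow> real"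
  assumes C: "continuous_on ({0..1}\<times>UNIV) (\<lambda>(s,p). h s p)"
    and K: "\<And>M. \<exists>R. \<forall>s\<in>{0..1}. \<forall>p. \<bar>p\<bar> \<ge> R \<longrightarrow> h s p \<ge> M"
begin

lemma hcont: assumes "s \<in> {0..1}" shows "continuous_on UNIV (h s)"
proof -
  have "continuous_on UNIV ((\<lambda>(s,p). h s p) \<circ> (\<lambda>p. (s,p)))"
    by (rule continuous_on_compose) (auto intro!: continuous_intros continuous_on_subset[OF C] simp: assms[simplified])
  then show ?thesis by (simp add: o_def)
qed

lemma hcont_s: "continuous_on {0..1} (\<lambda>s. h s p)"
proof -
  have "continuous_on {0..1} ((\<lambda>(s,p). h s p) \<circ> (\<lambda>s. (s,p)))"
    by (rule continuous_on_compose) (auto intro!: continuous_intros continuous_on_subset[OF C])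
  then show ?thesis by (simp add: o_def)
qed

lemma proj_closed: "closed (fst ` (({0..1} \<times> {l..r}) \<inter> (\<lambda>(s,p). h s p) -` {..b}))"
proof -
  have cl: "closed (({0..1} \<times> {l..r}) \<inter> (\<lambda>(s,p). h s p) -` {..b})"
    by (rule continuous_closed_preimage) (auto intro: continuous_on_subset[OF C] closed_Times)
  have "compact ({0..1::real} \<times> {l..r::real})" by (intro compact_Times) auto
  then have "compact (({0..1} \<times> {l..r}) \<inter> (\<lambda>(s,p). h s p) -` {..b})"
    using cl by (meson Int_lower1 compact_eq_bounded_closed bounded_subset)
  then show ?thesis
    by (intro compact_imp_closed compact_continuous_image continuous_intros)
qed

lemma minpt: assumes s: "s \<in> {0..1}" shows "\<exists>p0. \<forall>p. h s p0 \<le> h s p"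
proof -
  obtain R where R: "\<forall>s'\<in>{0..1}. \<forall>p. \<bar>p\<bar> \<ge> R \<longrightarrow> h s' p \<ge> h s 0" using K[of "h s 0"] by blast
  obtain p0 where p0: "p0 \<in> {-\<bar>R\<bar>..\<bar>R\<bar>}" "\<forall>y\<in>{-\<bar>R\<bar>..\<bar>R\<bar>}. h s p0 \<le> h s y"
    using continuous_attains_inf[of "{-\<bar>R\<bar>..\<bar>R\<bar>}" "h s"] continuous_on_subset[OF hcont[OF s]] by force
  have "h s p0 \<le> h s p" for p
  proof (cases "p \<in> {-\<bar>R\<bar>..\<bar>R\<bar>}")
    case True then show ?thesis using p0 by auto
  next
    case False
    then have "h s p \<ge> h s 0" using R s by auto
    moreover have "h s p0 \<le> h s 0" using p0 by auto
    ultimately show ?thesis by linarith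
  qed
  then show ?thesis by blast
qed

lemma reach: assumes s: "s \<in> {0..1}" and q: "h s q \<le> b" shows "\<exists>x\<ge>q. h s x = b"
proof -
  obtain R where R: "\<forall>s\<in>{0..1}. \<forall>p. \<bar>p\<bar> \<ge> R \<longrightarrow> h s p \<ge> b + 1" using K[of "b+1"] by blast
  have "h s (\<bar>R\<bar> + \<bar>q\<bar>) \<ge> b + 1" using R s by auto
  then show ?thesis
    using IVT'[of "h s" q b "\<bar>R\<bar> + \<bar>q\<bar>"] q continuous_on_subset[OF hcont[OF s]] by force
qed

lemma sup_char: assumes s: "s \<in> {0..1}" and q: "h s q \<le> b"
  shows "h s (Sup {p. h s p = b}) = b" "\<And>p. h s p \<le> b \<Longrightarrow> p \<le> Sup {p. h s p = b}"
proof -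
  obtain R where R: "\<forall>s\<in>{0..1}. \<forall>p. \<bar>p\<bar> \<ge> R \<longrightarrow> h s p \<ge> b + 1" using K[of "b+1"] by blast
  have bdd: "bdd_above {p. h s p = b}"
  proof (rule bdd_aboveI)
    fix x assume "x \<in> {p. h s p = b}"
    then show "x \<le> \<bar>R\<bar>" using R s by (smt (verit) mem_Collect_eq)
  qed
  have ne: "{p. h s p = b} \<noteq> {}" using reach[OF s q] by auto
  have cl: "closed {p. h s p = b}"
    using continuous_closed_vimage[of "{b}" "h s"] hcont[OF s] by (simp add: vimage_def continuous_on_eq_continuous_at)
  show "h s (Sup {p. h s p = b}) = b" using closed_contains_Sup[OF ne bdd cl] by simp
  fix p assume "h s p \<le> b"
  then obtain x where "x \<ge> p" "h s x = b" using reach[OF s] by blast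
  then show "p \<le> Sup {p. h s p = b}" using cSup_upper[OF _ bdd, of x] by auto
qed

lemma strict: assumes s: "s \<in> {0..1}" and q: "h s q \<le> b" and ba: "b < a"
  shows "Sup {p. h s p = b} < Sup {p. h s p = a}"
proof -
  let ?r = "Sup {p. h s p = b}"
  have r: "h s ?r = b" using sup_char[OF s q] by simp
  have q': "h s q \<le> a" using q ba by simp
  have "?r \<le> Sup {p. h s p = a}" using sup_char(2)[OF s q', of ?r] r ba by simp
  moreover have "?r \<noteq> Sup {p. h s p = a}" using sup_char(1)[OF s q'] r ba by auto
  ultimately show ?thesis by simp
qed

lemma sigma_cont:
  assumes ex: "\<And>s. s \<in> {0..1} \<Longrightarrow> \<exists>q. h s q \<le> b"
    and cv: "\<And>s. s \<in> {0..1} \<Longrightarrow> convex {p. h s p \<le> b}"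
    and it: "\<And>s. s \<in> {0..1} \<Longrightarrow> interior {p. h s p \<le> b} = {p. h s p < b}"
  shows "continuous_on {0..1} (\<lambda>s. Sup {p. h s p = b})"
proof -
  define g where "g s = Sup {p. h s p = b}" for s
  obtain R where R: "\<forall>s\<in>{0..1}. \<forall>p. \<bar>p\<bar> \<ge> R \<longrightarrow> h s p \<ge> b + 1" using K[of "b+1"] by blast
  have gb: "h s (g s) = b" if "s \<in> {0..1}" for s
    using ex[OF that] sup_char(1)[OF that] unfolding g_def by blast
  have gge: "p \<le> g s" if "s \<in> {0..1}" "h s p \<le> b" for s p
    using sup_char(2)[OF that that(2)] unfolding g_def by blast
  have small: "\<bar>p\<bar> < \<bar>R\<bar>" if "s \<in> {0..1}" "h s p \<le> b" for s p
  proof -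
    have "\<not> \<bar>p\<bar> \<ge> R" using R that by force
    then show ?thesis using abs_ge_self[of R] by linarith
  qed
  have usc: "{s\<in>{0..1}. t \<le> g s} = fst ` (({0..1} \<times> {t..\<bar>R\<bar>}) \<inter> (\<lambda>(s,p). h s p) -` {..b})" for t
  proof (intro equalityI subsetI)
    fix s assume "s \<in> {s\<in>{0..1}. t \<le> g s}"
    then have s: "s \<in> {0..1}" "t \<le> g s" by auto
    then have "(s, g s) \<in> ({0..1} \<times> {t..\<bar>R\<bar>}) \<inter> (\<lambda>(s,p). h s p) -` {..b}"
      using gb[OF s(1)] small[OF s(1), of "g s"] by auto
    then show "s \<in> fst ` (({0..1} \<times> {t..\<bar>R\<bar>}) \<inter> (\<lambda>(s,p). h s p) -` {..b})"
      by (metis fst_conv image_eqI)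
  next
    fix s assume "s \<in> fst ` (({0..1} \<times> {t..\<bar>R\<bar>}) \<inter> (\<lambda>(s,p). h s p) -` {..b})"
    then obtain p where "s \<in> {0..1}" "t \<le> p" "h s p \<le> b" by auto
    then show "s \<in> {s\<in>{0..1}. t \<le> g s}" using gge by force
  qed
  have clusc: "closed {s\<in>{0..1}. t \<le> g s}" for t
    unfolding usc by (rule proj_closed)
  have open_lt: "openin (top_of_set {0..1}) {s\<in>{0..1}. g s < t}" for t
  proof -
    have "{s\<in>{0..1}. g s < t} = {0..1} \<inter> - {s\<in>{0..1}. t \<le> g s}" by auto
    moreover have "open (- {s\<in>{0..1}. t \<le> g s})" using clusc by auto
    ultimately show ?thesis by (metis inf_commute openin_open_Int)
  qed
  have open_gt: "openin (top_of_set {0..1}) {s\<in>{0..1}. t < g s}" for t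
    unfolding openin_euclidean_subtopology_iff
  proof (intro conjI ballI)
    show "{s\<in>{0..1}. t < g s} \<subseteq> {0..1}" by auto
    fix s0 assume "s0 \<in> {s\<in>{0..1}. t < g s}"
    then have s0: "s0 \<in> {0..1}" "t < g s0" by auto
    show "\<exists>e>0. \<forall>x'\<in>{0..1}. dist x' s0 < e \<longrightarrow> x' \<in> {s\<in>{0..1}. t < g s}"
    proof (cases "\<exists>p>t. h s0 p < b")
      case True
      then obtain p where p: "p > t" "h s0 p < b" by blast
      obtain e where e: "e > 0" "\<forall>x'\<in>{0..1}. dist x' s0 < e \<longrightarrow> dist (h x' p) (h s0 p) < b - h s0 p"
        using hcont_s[of p] s0(1) p(2) unfolding continuous_on_iff by (metis diff_gt_0_iff_gt)
      show ?thesis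
      proof (intro exI[of _ e] conjI ballI impI)
        fix x' assume "x' \<in> {0..1}" "dist x' s0 < e"
        then have "h x' p \<le> b" using e(2) by (auto simp: dist_real_def)
        then have "p \<le> g x'" using gge \<open>x' \<in> {0..1}\<close> by blast
        then show "x' \<in> {s\<in>{0..1}. t < g s}" using p(1) \<open>x' \<in> {0..1}\<close> by auto
      qed (use e in auto)
    next
      case False
      then have F: "\<And>p. p > t \<Longrightarrow> h s0 p \<ge> b" by force
      have notin: "h s0 p > b" if "p \<le> t" for p
      proof (rule ccontr)
        assume "\<not> h s0 p > b"
        then have hp: "h s0 p \<le> b" by simp
        have "is_interval {q. h s0 q \<le> b}" using cv[OF s0(1)] is_interval_convex_1 by blast
        then have "{p<..<g s0} \<subseteq> {q. h s0 q \<le> b}"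
        proof (intro subsetI)
          fix x assume "is_interval {q. h s0 q \<le> b}" "x \<in> {p<..<g s0}"
          moreover have "p \<in> {q. h s0 q \<le> b}" "g s0 \<in> {q. h s0 q \<le> b}" using hp gb[OF s0(1)] by auto
          ultimately show "x \<in> {q. h s0 q \<le> b}" unfolding is_interval_1
            by (meson greaterThanLessThan_iff less_eq_real_def)
        qed
        then have "{p<..<g s0} \<subseteq> interior {q. h s0 q \<le> b}"
          by (simp add: interior_maximal)
        then have "{p<..<g s0} \<subseteq> {q. h s0 q < b}" using it[OF s0(1)] by simp
        moreover have "(t + g s0)/2 \<in> {p<..<g s0}" using that s0(2) by auto
        ultimately have "h s0 ((t + g s0)/2) < b" by blast
        moreover have "(t + g s0)/2 > t" using s0(2) by simp
        ultimately show False using F[of "(t + g s0)/2"] by linarith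
      qed
      let ?P = "fst ` (({0..1} \<times> {-\<bar>R\<bar>..t}) \<inter> (\<lambda>(s,p). h s p) -` {..b})"
      have "s0 \<notin> ?P"
      proof
        assume "s0 \<in> ?P"
        then obtain p where "p \<le> t" "h s0 p \<le> b" by auto
        then show False using notin by fastforce
      qed
      moreover have "open (- ?P)" using proj_closed by auto
      ultimately obtain e where e: "e > 0" "ball s0 e \<subseteq> - ?P"
        by (meson ComplI open_contains_ball)
      show ?thesis
      proof (intro exI[of _ e] conjI ballI impI)
        fix x' assume x': "x' \<in> {0..1}" "dist x' s0 < e"
        then have "x' \<in> ball s0 e" by (simp add: dist_commute)
        then have "x' \<notin> ?P" using e(2) by blast
        obtain q where q: "h x' q \<le> b" using ex[OF x'(1)] by blast
        have "\<bar>q\<bar> < \<bar>R\<bar>" using small[OF x'(1) q] .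
        have "q > t"
        proof (rule ccontr)
          assume "\<not> q > t"
          then have "(x', q) \<in> ({0..1} \<times> {-\<bar>R\<bar>..t}) \<inter> (\<lambda>(s,p). h s p) -` {..b}"
            using \<open>\<bar>q\<bar> < \<bar>R\<bar>\<close> q x'(1) by auto
          then have "x' \<in> ?P" by (metis fst_conv image_eqI)
          then show False using \<open>x' \<notin> ?P\<close> by simp
        qed
        moreover have "q \<le> g x'" using gge[OF x'(1) q] .
        ultimately show "x' \<in> {s\<in>{0..1}. t < g s}" using x'(1) by auto
      qed (use e in auto)
    qed
  qed
  have "continuous_map (top_of_set {0..1}) euclidean g"
    unfolding continuous_map_upper_lower_semicontinuous_lt using open_lt open_gt by simp
  then show ?thesis unfolding g_def by simp
qed

lemma inf_eq: assumes s: "s \<in> {0..1}" shows "\<exists>p0. (INF p. h s p) = h s p0 \<and> (\<forall>p. h s p0 \<le> h s p)"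
proof -
  obtain p0 where p0: "\<forall>p. h s p0 \<le> h s p" using minpt[OF s] by blast
  have "(INF p. h s p) = h s p0"
  proof (rule antisym)
    show "(INF p. h s p) \<le> h s p0" by (rule cINF_lower) (use p0 in \<open>auto intro: bdd_belowI2\<close>)
    show "h s p0 \<le> (INF p. h s p)" by (rule cINF_greatest) (use p0 in auto)
  qed
  then show ?thesis using p0 by blast
qed

lemma bound0: "\<exists>B. \<forall>s\<in>{0..1}. h s 0 \<le> B"
proof -
  have "compact ((\<lambda>s. h s 0) ` {0..1})" by (intro compact_continuous_image hcont_s) auto
  then obtain B where "\<forall>x\<in>(\<lambda>s. h s 0) ` {0..1}. \<bar>x\<bar> \<le> B"
    using compact_imp_bounded bounded_real by blast
  then show ?thesis
  proof (intro exI[of _ B] ballI)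
    fix s :: real assume "s \<in> {0..1}"
    then have "\<bar>h s 0\<bar> \<le> B" using \<open>\<forall>x\<in>(\<lambda>s. h s 0) ` {0..1}. \<bar>x\<bar> \<le> B\<close> by blast
    then show "h s 0 \<le> B" by linarith
  qed
qed

lemma minH_le: assumes s: "s \<in> {0..1}" and b: "(SUP s\<in>{0..1}. (INF p. h s p)) \<le> b"
  shows "\<exists>q. h s q \<le> b"
proof -
  obtain B where B: "\<forall>s\<in>{0..1}. h s 0 \<le> B" using bound0 by blast
  have le0: "(INF p. h s p) \<le> h s 0" if "s \<in> {0..1}" for s
    using inf_eq[OF that] by auto
  have "bdd_above ((\<lambda>s. (INF p. h s p)) ` {0..1})"
    by (rule bdd_aboveI2[of _ _ B]) (use le0 B in force)
  then have "(INF p. h s p) \<le> b" using cSUP_upper[OF s] b by (meson order_trans)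
  then show ?thesis using inf_eq[OF s] by metis
qed

lemma visc_ge: assumes V: "visc_subsol h a' u" shows "(SUP s\<in>{0..1}. (INF p. h s p)) \<le> a'"
proof (rule cSUP_least)
  show "{0..1::real} \<noteq> {}" by simp
  fix s0 :: real assume s0: "s0 \<in> {0..1}"
  show "(INF p. h s0 p) \<le> a'"
  proof (rule ccontr)
    assume "\<not> (INF p. h s0 p) \<le> a'"
    moreover obtain p0 where "(INF p. h s0 p) = h s0 p0" "\<forall>p. h s0 p0 \<le> h s0 p" using inf_eq[OF s0] by blast
    ultimately have gt: "\<And>p. h s0 p > a'" by (metis not_le order_less_le_trans)
    obtain R where R: "\<forall>s\<in>{0..1}. \<forall>p. \<bar>p\<bar> \<ge> R \<longrightarrow> h s p \<ge> a' + 1" using K[of "a'+1"] by blast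
    let ?P = "fst ` (({0..1} \<times> {-\<bar>R\<bar>..\<bar>R\<bar>}) \<inter> (\<lambda>(s,p). h s p) -` {..a'})"
    have "s0 \<notin> ?P"
    proof
      assume "s0 \<in> ?P"
      then obtain p where "h s0 p \<le> a'" by auto
      then show False using gt[of p] by linarith
    qed
    moreover have "open (- ?P)" using proj_closed by auto
    ultimately obtain d where d: "d > 0" "ball s0 d \<subseteq> - ?P"
      by (meson ComplI open_contains_ball)
    have big: "h s p > a'" if s: "s \<in> {0..1}" "\<bar>s - s0\<bar> < d" for s p
    proof (rule ccontr)
      assume "\<not> h s p > a'"
      then have hp: "h s p \<le> a'" by simp
      then have "\<not> \<bar>p\<bar> \<ge> R" using R s by force
      then have "(s,p) \<in> ({0..1} \<times> {-\<bar>R\<bar>..\<bar>R\<bar>}) \<inter> (\<lambda>(s,p). h s p) -` {..a'}"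
        using hp s abs_ge_self[of R] by auto
      then have "s \<in> ?P" by (metis fst_conv image_eqI)
      moreover have "s \<in> ball s0 d" using s by (simp add: dist_real_def)
      ultimately show False using d by blast
    qed
    define e where "e = min (d/4) (1/4)"
    define m where "m = (if s0 \<le> 1/2 then s0 + e else s0 - e)"
    define \<rho> where "\<rho> = e/2"
    have e0: "e > 0" "e \<le> d/4" "e \<le> 1/4" using d unfolding e_def by auto
    have rho: "\<rho> > 0" "0 < m - \<rho>" "m + \<rho> < 1" "\<bar>m - s0\<bar> + \<rho> < d"
      using e0 s0 unfolding \<rho>_def m_def by auto
    let ?I = "{m-\<rho>..m+\<rho>}"
    have I01: "?I \<subseteq> {0..1}" using rho by auto
    have ucont: "continuous_on ?I u" using V I01 unfolding visc_subsol_def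
      by (meson continuous_on_subset)
    have "compact (u ` ?I)" by (intro compact_continuous_image ucont) auto
    then obtain B where B: "\<forall>x\<in>?I. \<bar>u x\<bar> \<le> B"
      using compact_imp_bounded bounded_real by (metis image_eqI)
    define Kc where "Kc = (2*B+1)/\<rho>^2"
    define \<phi> where "\<phi> x = Kc * (x - m)^2" for x
    have "\<exists>x\<in>?I. \<forall>y\<in>?I. u y - \<phi> y \<le> u x - \<phi> x"
      by (rule continuous_attains_sup) (use rho in \<open>auto intro!: continuous_intros ucont simp: \<phi>_def\<close>)
    then obtain xs where xs: "xs \<in> ?I" "\<forall>y\<in>?I. u y - \<phi> y \<le> u xs - \<phi> xs" by blast
    have mI: "m \<in> ?I" using rho by auto
    have endp: "u y - \<phi> y < u m - \<phi> m" if "y = m - \<rho> \<or> y = m + \<rho>" for y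
    proof -
      have "\<phi> y = 2*B+1" using that rho unfolding \<phi>_def Kc_def by (auto simp: power2_eq_square)
      moreover have "\<phi> m = 0" unfolding \<phi>_def by simp
      moreover have "y \<in> ?I" using that rho by auto
      moreover have "\<bar>u y\<bar> \<le> B" "\<bar>u m\<bar> \<le> B" using B mI \<open>y \<in> ?I\<close> by auto
      ultimately show ?thesis by linarith
    qed
    have "u m - \<phi> m \<le> u xs - \<phi> xs" using xs(2) mI by blast
    then have "\<not> (xs = m - \<rho> \<or> xs = m + \<rho>)" using endp[of xs] by linarith
    then have xsin: "m - \<rho> < xs" "xs < m + \<rho>"
      using xs(1) by auto
    define d2 where "d2 = min (xs - (m-\<rho>)) (m+\<rho> - xs)"
    have d2: "d2 > 0" using xsin unfolding d2_def by auto
    have xs01: "xs \<in> {0<..<1}" using xsin rho by auto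
    have der: "\<forall>x. (\<phi> has_real_derivative (2*Kc*(x-m))) (at x)"
      unfolding \<phi>_def by (auto intro!: derivative_eq_intros)
    have "h xs (2*Kc*(xs-m)) \<le> a'"
      using V xs01 unfolding visc_subsol_def
    proof (elim conjE)
      assume "\<forall>s\<in>{0<..<1}. \<forall>\<phi> \<phi>'. (\<forall>x. (\<phi> has_real_derivative \<phi>' x) (at x)) \<and> continuous_on UNIV \<phi>' \<and>
        (\<exists>\<delta>>0. \<forall>x\<in>{0<..<1}. \<bar>x - s\<bar> < \<delta> \<longrightarrow> u x - \<phi> x \<le> u s - \<phi> s) \<longrightarrow> h s (\<phi>' s) \<le> a'"
      then have H: "(\<forall>x. (\<phi> has_real_derivative (\<lambda>x. 2*Kc*(x-m)) x) (at x)) \<and> continuous_on UNIV (\<lambda>x. 2*Kc*(x-m)) \<and>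
        (\<exists>\<delta>>0. \<forall>x\<in>{0<..<1}. \<bar>x - xs\<bar> < \<delta> \<longrightarrow> u x - \<phi> x \<le> u xs - \<phi> xs) \<longrightarrow> h xs (2*Kc*(xs-m)) \<le> a'"
        using xs01 by (metis (no_types, lifting))
      have "\<forall>x\<in>{0<..<1}. \<bar>x - xs\<bar> < d2 \<longrightarrow> u x - \<phi> x \<le> u xs - \<phi> xs"
      proof (intro ballI impI)
        fix x assume "\<bar>x - xs\<bar> < d2"
        then have "x \<in> ?I" unfolding d2_def by auto
        then show "u x - \<phi> x \<le> u xs - \<phi> xs" using xs by blast
      qed
      then show ?thesis using H der d2 by (auto intro!: continuous_intros)
    qed
    moreover have "h xs (2*Kc*(xs-m)) > a'"
      by (rule big) (use xs01 xsin rho in auto)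
    ultimately show False by linarith
  qed
qed

lemma visc_nonempty: "\<exists>a'. \<exists>u. visc_subsol h a' u \<and> u 0 = u 1"
proof -
  obtain B where B: "\<forall>s\<in>{0..1}. h s 0 \<le> B" using bound0 by blast
  have "visc_subsol h B (\<lambda>_. 0)"
    unfolding visc_subsol_def
  proof (intro conjI ballI allI impI)
    show "continuous_on {0..1} (\<lambda>_. 0::real)" by simp
    fix s \<phi> \<phi>' assume s: "s \<in> {0<..<1::real}"
      and H: "(\<forall>x. (\<phi> has_real_derivative \<phi>' x) (at x)) \<and> continuous_on UNIV \<phi>' \<and>
        (\<exists>\<delta>>0. \<forall>x\<in>{0<..<1}. \<bar>x - s\<bar> < \<delta> \<longrightarrow> 0 - \<phi> x \<le> 0 - \<phi> s)"
    then obtain \<delta> where dl: "\<delta> > 0" "\<forall>x\<in>{0<..<1}. \<bar>x - s\<bar> < \<delta> \<longrightarrow> 0 - \<phi> x \<le> 0 - \<phi> s" by blast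
    define d where "d = min \<delta> (min s (1-s))"
    have "d > 0" using dl s unfolding d_def by auto
    have "\<forall>y. \<bar>s - y\<bar> < d \<longrightarrow> \<phi> s \<le> \<phi> y"
    proof (intro allI impI)
      fix y assume "\<bar>s - y\<bar> < d"
      then have "y \<in> {0<..<1}" "\<bar>y - s\<bar> < \<delta>" unfolding d_def by auto
      then show "\<phi> s \<le> \<phi> y" using dl by force
    qed
    then have "\<phi>' s = 0" using DERIV_local_min[of \<phi> "\<phi>' s" s d] H \<open>d > 0\<close> by blast
    then show "h s (\<phi>' s) \<le> B" using B s by auto
  qed
  then show ?thesis by auto
qed

end


lemma arc_CK:
  assumes "hamiltonians \<E> H" "\<gamma> \<in> \<E>"
  shows "continuous_on ({0..1}\<times>UNIV) (\<lambda>(s,p). H \<gamma> s p)"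
    "\<And>M. \<exists>R. \<forall>s\<in>{0..1}. \<forall>p. \<bar>p\<bar> \<ge> R \<longrightarrow> H \<gamma> s p \<ge> M"
    "\<And>s b. s \<in> {0..1} \<Longrightarrow> convex {p. H \<gamma> s p \<le> b}"
    "\<And>s b. s \<in> {0..1} \<Longrightarrow> interior {p. H \<gamma> s p \<le> b} = {p. H \<gamma> s p < b}"
  using assms unfolding hamiltonians_def by blast+

lemma c_ge_a:
  assumes "hamiltonians \<E> H" "\<gamma> \<in> \<E>"
  shows "a_arc H \<gamma> \<le> c_arc H \<gamma>"
  unfolding c_arc_def
proof (rule cInf_greatest)
  show "{a. \<exists>u. visc_subsol (H \<gamma>) a u \<and> u 0 = u 1} \<noteq> {}"
    using visc_nonempty[OF arc_CK(1,2)[OF assms]] by auto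
  fix x assume "x \<in> {a. \<exists>u. visc_subsol (H \<gamma>) a u \<and> u 0 = u 1}"
  then obtain u where "visc_subsol (H \<gamma>) x u" by auto
  then show "a_arc H \<gamma> \<le> x"
    using visc_ge[OF arc_CK(1,2)[OF assms]] unfolding a_arc_def minH_def by blast
qed

lemma arc_le_zero:
  assumes "network \<E>" "hamiltonians \<E> H" "\<gamma> \<in> \<E>"
  shows "a_arc H \<gamma> \<le> a_zero \<E> H"
proof -
  have fin: "finite \<E>" using assms(1) unfolding network_def by blast
  let ?S = "(a_arc H) ` {\<gamma>\<in>\<E>. \<gamma> 0 \<noteq> \<gamma> 1} \<union> (c_arc H) ` {\<gamma>\<in>\<E>. \<gamma> 0 = \<gamma> 1}"
  have finS: "finite ?S" using fin by auto
  show ?thesis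
  proof (cases "\<gamma> 0 = \<gamma> 1")
    case True
    then have "c_arc H \<gamma> \<in> ?S" using assms(3) by auto
    then have "c_arc H \<gamma> \<le> Max ?S" using finS by (rule Max_ge[rotated])
    then show ?thesis using c_ge_a[OF assms(2,3)] unfolding a_zero_def by linarith
  next
    case False
    then have "a_arc H \<gamma> \<in> ?S" using assms(3) by auto
    then show ?thesis using finS unfolding a_zero_def by (rule Max_ge[rotated])
  qed
qed

lemma sigma_strict:
  assumes "hamiltonians \<E> H" "\<gamma> \<in> \<E>" "a_arc H \<gamma> \<le> b" "b < a"
  shows "sigma H b \<gamma> < sigma H a \<gamma>"
proof -
  note CK = arc_CK[OF assms(1,2)]
  have exb: "\<exists>q. H \<gamma> s q \<le> b" if "s \<in> {0..1}" for s
    using minH_le[OF CK(1,2) that] assms(3) unfolding a_arc_def minH_def by blast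
  have exa: "\<exists>q. H \<gamma> s q \<le> a" if "s \<in> {0..1}" for s
    using exb[OF that] assms(4) by (meson less_imp_le order_trans)
  show ?thesis
    unfolding sigma_def sigma_plus_def[abs_def]
  proof (rule integral_less_real)
    show "continuous_on {0..1} (\<lambda>s. Sup {p. H \<gamma> s p = b})"
      by (rule sigma_cont[OF CK(1,2)]) (use exb CK(3,4) in auto)
    show "continuous_on {0..1} (\<lambda>s. Sup {p. H \<gamma> s p = a})"
      by (rule sigma_cont[OF CK(1,2)]) (use exa CK(3,4) in auto)
    show "{0<..<1::real} \<noteq> {}" by simp
    fix s :: real assume "s \<in> {0<..<1}"
    then have s: "s \<in> {0..1}" by auto
    then obtain q where "H \<gamma> s q \<le> b" using exb by blast
    then show "Sup {p. H \<gamma> s p = b} < Sup {p. H \<gamma> s p = a}"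
      using strict[OF CK(1,2) s _ assms(4)] by blast
  qed
qed

theorem proposition6p5:
  fixes \<E> :: "(real \<Rightarrow> 'a::euclidean_space) set"
    and H :: "(real \<Rightarrow> 'a) \<Rightarrow> real \<Rightarrow> real \<Rightarrow> real"
    and a :: real
  assumes "network \<E>"
    and "hamiltonians \<E> H"
    and "flat_condition \<E> H"
    and "a \<ge> a_zero \<E> H"
    and "\<exists>u. DFE_sol \<E> H a u"
  shows "a = critical_value \<E> H"
proof -
  obtain u where u: "DFE_sol \<E> H a u" using assms(5) by blast
  have fin: "finite \<E>" and ne: "\<E> \<noteq> {}"
    using assms(1) unfolding network_def by blast+
  have rc0: "\<forall>\<gamma>\<in>\<E>. rev_arc \<gamma> \<in> \<E>"
    using assms(1) unfolding network_def by (elim conjE) assumption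
  have rc: "rev_arc \<gamma> \<in> \<E>" if "\<gamma> \<in> \<E>" for \<gamma>
    using rc0 that by blast
  have rr: "rev_arc (rev_arc e) = e" for e :: "real \<Rightarrow> 'a"
    by (rule ext) (simp add: rev_arc_def)
  have r0: "rev_arc e 0 = e 1" "rev_arc e 1 = e 0" for e :: "real \<Rightarrow> 'a"
    by (simp_all add: rev_arc_def)
  define V where "V = vertices \<E>"
  have inV: "e 0 \<in> V" "e 1 \<in> V" if "e \<in> \<E>" for e
    using that unfolding V_def vertices_def by blast+
  have finV: "finite V"
  proof -
    have "V = (\<lambda>\<gamma>. \<gamma> 0) ` \<E> \<union> (\<lambda>\<gamma>. \<gamma> 1) ` \<E>" unfolding V_def vertices_def by blast
    then show ?thesis using fin by simp
  qed
  define A where "A x = {e\<in>\<E>. e 0 = x}" for x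
  have finA: "finite ((\<lambda>e. u (e 1) + sigma H a (rev_arc e)) ` A x)" for x
    using fin unfolding A_def by auto
  have sol: "u x = Min ((\<lambda>e. u (e 1) + sigma H a (rev_arc e)) ` A x)" if "x \<in> V" for x
    using u that unfolding DFE_sol_def V_def A_def by blast
  have Ane: "A x \<noteq> {}" if "x \<in> V" for x
  proof -
    from that obtain e where "e \<in> \<E>" "e 0 = x \<or> e 1 = x" unfolding V_def vertices_def by blast
    then show ?thesis using rc[of e] r0[of e] unfolding A_def by blast
  qed
  have minle: "u x \<le> u (e 1) + sigma H a (rev_arc e)" if "x \<in> V" "e \<in> A x" for x e
    using sol[OF that(1)] Min_le[OF finA[of x]] that(2) by auto
  have attain: "\<exists>e. e \<in> \<E> \<and> e 0 = x \<and> u x = u (e 1) + sigma H a (rev_arc e)" if "x \<in> V" for x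
  proof -
    have "Min ((\<lambda>e. u (e 1) + sigma H a (rev_arc e)) ` A x) \<in> (\<lambda>e. u (e 1) + sigma H a (rev_arc e)) ` A x"
      using Min_in[OF finA[of x]] Ane[OF that] by blast
    then show ?thesis using sol[OF that] unfolding A_def by force
  qed
  have subsol_a: "DFE_subsol \<E> H a u"
    unfolding DFE_subsol_def
  proof
    fix e assume e: "e \<in> \<E>"
    have "rev_arc e \<in> A (e 1)" using rc[OF e] r0 unfolding A_def by auto
    then have "u (e 1) \<le> u (rev_arc e 1) + sigma H a (rev_arc (rev_arc e))"
      using minle inV(2)[OF e] by blast
    then show "u (e 1) - u (e 0) \<le> sigma H a e" using rr r0 by simp
  qed
  \<comment> \<open>a cycle of optimal edges\<close>
  have "\<forall>x\<in>V. \<exists>e. e \<in> \<E> \<and> e 0 = x \<and> u x = u (e 1) + sigma H a (rev_arc e)"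
    using attain by blast
  from bchoice[OF this] obtain ch where
    ch: "\<forall>x\<in>V. ch x \<in> \<E> \<and> ch x 0 = x \<and> u x = u (ch x 1) + sigma H a (rev_arc (ch x))" ..
  obtain g0 where "g0 \<in> \<E>" using ne by blast
  define x0 where "x0 = g0 0"
  have x0: "x0 \<in> V" using inV(1)[OF \<open>g0 \<in> \<E>\<close>] unfolding x0_def .
  define xs where "xs n = ((\<lambda>x. ch x 1) ^^ n) x0" for n
  have xsS: "xs (Suc n) = ch (xs n) 1" for n by (simp add: xs_def)
  have xsV: "xs n \<in> V" for n
  proof (induction n)
    case 0 then show ?case using x0 by (simp add: xs_def)
  next
    case (Suc n)
    then have "ch (xs n) \<in> \<E>" using ch by blast
    then show ?case unfolding xsS by (rule inV(2))
  qed
  have "\<not> inj xs"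
  proof
    assume "inj xs"
    moreover have "finite (range xs)" using finite_subset[OF _ finV] xsV by blast
    ultimately have "finite (UNIV :: nat set)" by (rule finite_imageD[rotated])
    then show False by simp
  qed
  then obtain i0 j0 where ij0: "xs i0 = xs j0" "i0 \<noteq> j0"
    unfolding inj_def by blast
  obtain i j where ij: "i < j" "xs i = xs j"
  proof (cases "i0 < j0")
    case True then show ?thesis using that ij0 by blast
  next
    case False then have "j0 < i0" using ij0(2) by simp
    then show ?thesis using that ij0(1) by simp
  qed
  define ek where "ek k = ch (xs k)" for k
  have ek: "ek k \<in> \<E>" "ek k 0 = xs k" "ek k 1 = xs (Suc k)"
    "u (xs k) = u (xs (Suc k)) + sigma H a (rev_arc (ek k))" for k
    using ch xsV[of k] xsS[of k] unfolding ek_def by auto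
  have usum: "u (xs i) - u (xs (i+n)) = (\<Sum>k<n. sigma H a (rev_arc (ek (i+k))))" for n
  proof (induction n)
    case 0 then show ?case by simp
  next
    case (Suc n) then show ?case using ek(4)[of "i+n"] by simp
  qed
  have lower: "a \<le> b" if b: "b \<in> {b. b \<ge> a_zero \<E> H \<and> (\<exists>u. DFE_subsol \<E> H b u)}" for b
  proof (rule ccontr)
    assume "\<not> a \<le> b"
    then have ba: "b < a" by simp
    from b obtain v where b0: "b \<ge> a_zero \<E> H" and v: "DFE_subsol \<E> H b v" by blast
    have vstep: "v (xs k) - v (xs (Suc k)) \<le> sigma H b (rev_arc (ek k))" for k
    proof -
      have "v (rev_arc (ek k) 1) - v (rev_arc (ek k) 0) \<le> sigma H b (rev_arc (ek k))"
        using v rc[OF ek(1)] unfolding DFE_subsol_def by blast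
      then show ?thesis using r0 ek(2,3) by simp
    qed
    have vsum: "v (xs i) - v (xs (i+n)) \<le> (\<Sum>k<n. sigma H b (rev_arc (ek (i+k))))" for n
    proof (induction n)
      case 0 then show ?case by simp
    next
      case (Suc n) then show ?case using vstep[of "i+n"] by simp
    qed
    have lt: "sigma H b (rev_arc (ek k)) < sigma H a (rev_arc (ek k))" for k
    proof (rule sigma_strict[OF assms(2) rc[OF ek(1)] _ ba])
      show "a_arc H (rev_arc (ek k)) \<le> b"
        using arc_le_zero[OF assms(1,2) rc[OF ek(1)[of k]]] b0 by linarith
    qed
    define n where "n = j - i"
    have n: "i + n = j" "n > 0" using ij unfolding n_def by auto
    have "(\<Sum>k<n. sigma H b (rev_arc (ek (i+k)))) < (\<Sum>k<n. sigma H a (rev_arc (ek (i+k))))"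
      by (rule sum_strict_mono) (use n lt in auto)
    moreover have "0 \<le> (\<Sum>k<n. sigma H b (rev_arc (ek (i+k))))" using vsum[of n] n ij by simp
    moreover have "(\<Sum>k<n. sigma H a (rev_arc (ek (i+k)))) = 0" using usum[of n] n ij by simp
    ultimately show False by linarith
  qed
  have "critical_value \<E> H = a"
    unfolding critical_value_def
    by (rule cInf_eq_minimum) (use assms(4) subsol_a lower in auto)
  then show ?thesis by simp
qed

end
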